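(* Let $m\ge2$ be an integer and let $A$ be a left brace with $A^{(3)}=A^{m+1}=\{0\}$. Let $a\in A$, and define $a_1=a$ and $a_{j+1}=a*a_j$ for $1\le j\le m-1$. Then for every $1\le k\le m-1$, \[(-a)*a_{m-k}=\sum_{j=1}^k(-1)^ja_{m-k+j}.\]
   Context: A left brace $(A,+,\cdot)$ is a set $A$ with two binary operations such that $(A,+)$ is an abelian group, $(A,\cdot)$ is a group, and $a(b+c)=ab-a+ac$ for all $a,b,c\in A$. In a left brace, $a*b=-a+ab-b$. For subsets $L,M\subseteq A$, $L*M$ is the subgroup of $(A,+)$ generated by $\{l*m\mid l\in L,m\in M\}$. Set $A^{(1)}=A$, $A^{(r+1)}=A^{(r)}*A$, and $A^1=A$, $A^{r+1}=A*A^r$ for $r\ge1$. *)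

theory Defs
  imports Main
begin

definition left_brace :: "('a::ab_group_add \<Rightarrow> 'a \<Rightarrow> 'a) \<Rightarrow> bool" where
  "left_brace mul \<longleftrightarrow>
     (\<forall>a b c. mul (mul a b) c = mul a (mul b c)) \<and>
     (\<exists>e. (\<forall>a. mul e a = a \<and> mul a e = a) \<and> (\<forall>a. \<exists>b. mul a b = e \<and> mul b a = e)) \<and>
     (\<forall>a b c. mul a (b + c) = mul a b - a + mul a c)"

definition brace_star :: "('a::ab_group_add \<Rightarrow> 'a \<Rightarrow> 'a) \<Rightarrow> 'a \<Rightarrow> 'a \<Rightarrow> 'a" where
  "brace_star mul a b = - a + mul a b - b"

definition add_subgroup :: "'a::ab_group_add set \<Rightarrow> bool" where
  "add_subgroup H \<longleftrightarrow> 0 \<in> H \<and> (\<forall>x\<in>H. \<forall>y\<in>H. x + y \<in> H) \<and> (\<forall>x\<in>H. - x \<in> H)"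

definition add_gen :: "'a::ab_group_add set \<Rightarrow> 'a set" where
  "add_gen S = \<Inter>{H. add_subgroup H \<and> S \<subseteq> H}"

definition set_star :: "('a::ab_group_add \<Rightarrow> 'a \<Rightarrow> 'a) \<Rightarrow> 'a set \<Rightarrow> 'a set \<Rightarrow> 'a set" where
  "set_star mul L M = add_gen {brace_star mul l x | l x. l \<in> L \<and> x \<in> M}"

text \<open>rseries_aux mul n = A^(n+1), lseries_aux mul n = A^(n+1).\<close>
primrec rseries_aux :: "('a::ab_group_add \<Rightarrow> 'a \<Rightarrow> 'a) \<Rightarrow> nat \<Rightarrow> 'a set" where
  "rseries_aux mul 0 = UNIV"
| "rseries_aux mul (Suc n) = set_star mul (rseries_aux mul n) UNIV"

primrec lseries_aux :: "('a::ab_group_add \<Rightarrow> 'a \<Rightarrow> 'a) \<Rightarrow> nat \<Rightarrow> 'a set" where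
  "lseries_aux mul 0 = UNIV"
| "lseries_aux mul (Suc n) = set_star mul UNIV (lseries_aux mul n)"

text \<open>right_series mul r = A^(r), left_series mul r = A^r, for r \<ge> 1.\<close>
definition right_series :: "('a::ab_group_add \<Rightarrow> 'a \<Rightarrow> 'a) \<Rightarrow> nat \<Rightarrow> 'a set" where
  "right_series mul r = rseries_aux mul (r - 1)"

definition left_series :: "('a::ab_group_add \<Rightarrow> 'a \<Rightarrow> 'a) \<Rightarrow> nat \<Rightarrow> 'a set" where
  "left_series mul r = lseries_aux mul (r - 1)"

text \<open>aseq_aux mul a n = a_(n+1): a_1 = a, a_(j+1) = a * a_j.\<close>
primrec aseq_aux :: "('a::ab_group_add \<Rightarrow> 'a \<Rightarrow> 'a) \<Rightarrow> 'a \<Rightarrow> nat \<Rightarrow> 'a" where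
  "aseq_aux mul a 0 = a"
| "aseq_aux mul a (Suc n) = brace_star mul a (aseq_aux mul a n)"

definition aseq :: "('a::ab_group_add \<Rightarrow> 'a \<Rightarrow> 'a) \<Rightarrow> 'a \<Rightarrow> nat \<Rightarrow> 'a" where
  "aseq mul a j = aseq_aux mul a (j - 1)"

end

theory Submission
  imports Defs
begin

lemma gen_mem: "x \<in> S \<Longrightarrow> x \<in> add_gen S"
  unfolding add_gen_def by auto

lemma gen_neg: "x \<in> S \<Longrightarrow> - x \<in> add_gen S"
  unfolding add_gen_def add_subgroup_def by auto

lemma mul_zero:
  assumes "left_brace mul" shows "mul x 0 = x"
proof -
  have "mul x (0+0) = mul x 0 - x + mul x 0" using assms unfolding left_brace_def by blast
  then show ?thesis by (simp add: algebra_simps)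
qed

lemma L_add:
  assumes "left_brace mul"
  shows "- x + mul x (y + z) = (- x + mul x y) + (- x + mul x z)"
  using assms unfolding left_brace_def by (simp add: algebra_simps)

lemma L_neg:
  assumes "left_brace mul"
  shows "- x + mul x (- y) = - (- x + mul x y)"
proof -
  have "- x + mul x (y + - y) = (- x + mul x y) + (- x + mul x (-y))" by (rule L_add[OF assms])
  then show ?thesis using mul_zero[OF assms, of x] by (simp add: algebra_simps)
qed

lemma L_inj:
  assumes "left_brace mul" and "- x + mul x y = - x + mul x z" shows "y = z"
proof -
  from assms(1) obtain e where e: "\<forall>a. mul e a = a \<and> mul a e = a"
    and inv: "\<forall>a. \<exists>b. mul a b = e \<and> mul b a = e"
    and ass: "\<forall>a b c. mul (mul a b) c = mul a (mul b c)"
    unfolding left_brace_def by blast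
  obtain b where b: "mul b x = e" using inv by blast
  have "mul x y = mul x z" using assms(2) by simp
  then have "mul b (mul x y) = mul b (mul x z)" by simp
  then show ?thesis using ass b e by metis
qed

lemma L_comp:
  assumes "left_brace mul"
  shows "- mul x y + mul (mul x y) z = - x + mul x (- y + mul y z)"
proof -
  have ass: "mul (mul x y) z = mul x (mul y z)" using assms unfolding left_brace_def by blast
  have "- x + mul x (- y + mul y z) = (- x + mul x (-y)) + (- x + mul x (mul y z))"
    by (rule L_add[OF assms])
  also have "\<dots> = - (- x + mul x y) + (- x + mul x (mul y z))" using L_neg[OF assms] by simp
  finally show ?thesis using ass by (simp add: algebra_simps)
qed

lemma L_sum:
  assumes "left_brace mul"
  shows "- x + mul x (sum f (A::nat set)) = (\<Sum>i\<in>A. - x + mul x (f i))"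
proof (induction A rule: infinite_finite_induct)
  case (infinite A) then show ?case using mul_zero[OF assms] by simp
next
  case empty then show ?case using mul_zero[OF assms] by simp
next
  case (insert i F)
  then show ?case using L_add[OF assms] by simp
qed

lemma aseq_in: "aseq_aux mul a n \<in> lseries_aux mul n"
proof (induction n)
  case 0 then show ?case by simp
next
  case (Suc n)
  then show ?case unfolding lseries_aux.simps set_star_def
    by (auto intro!: gen_mem)
qed

definition sg :: "nat \<Rightarrow> 'a::ab_group_add \<Rightarrow> 'a" where
  "sg j x = (if even j then x else - x)"

lemma L_sg:
  assumes "left_brace mul"
  shows "- a + mul a (sg j x) = sg j x + sg j (brace_star mul a x)"
proof (cases "even j")
  case True then show ?thesis by (simp add: sg_def brace_star_def)
next
  case False
  have "- a + mul a (- x) = - (- a + mul a x)" by (rule L_neg[OF assms])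
  with False show ?thesis by (simp add: sg_def brace_star_def algebra_simps)
qed

lemma sg_Suc: "sg (Suc k) x = - sg k x"
  by (simp add: sg_def)

lemma tele:
  assumes "left_brace mul"
  shows "- a + mul a (\<Sum>j=0..k. sg j (aseq_aux mul a (t + j)))
      = aseq_aux mul a t + sg k (aseq_aux mul a (t + Suc k))"
proof (induction k)
  case 0
  then show ?case by (simp add: sg_def brace_star_def algebra_simps)
next
  case (Suc k)
  have "- a + mul a (\<Sum>j=0..Suc k. sg j (aseq_aux mul a (t + j)))
     = (- a + mul a (\<Sum>j=0..k. sg j (aseq_aux mul a (t + j))))
       + (- a + mul a (sg (Suc k) (aseq_aux mul a (t + Suc k))))"
    unfolding sum.atLeast0_atMost_Suc by (rule L_add[OF assms])
  also have "\<dots> = aseq_aux mul a t + sg k (aseq_aux mul a (t + Suc k))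
       + (- a + mul a (sg (Suc k) (aseq_aux mul a (t + Suc k))))" using Suc by simp
  also have "\<dots> = aseq_aux mul a t + sg (Suc k) (aseq_aux mul a (t + Suc (Suc k)))"
  proof -
    have "aseq_aux mul a (t + Suc (Suc k)) = brace_star mul a (aseq_aux mul a (t + Suc k))"
      by simp
    moreover have "- a + mul a (sg (Suc k) (aseq_aux mul a (t + Suc k)))
       = sg (Suc k) (aseq_aux mul a (t + Suc k)) + sg (Suc k) (brace_star mul a (aseq_aux mul a (t + Suc k)))"
      by (rule L_sg[OF assms])
    ultimately show ?thesis unfolding sg_Suc by (simp del: aseq_aux.simps)
  qed
  finally show ?case .
qed

theorem mainTheorem10:
  fixes mul :: "'a::ab_group_add \<Rightarrow> 'a \<Rightarrow> 'a" and m k :: nat and a :: 'a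
  assumes "m \<ge> 2"
    and "left_brace mul"
    and "right_series mul 3 = {0}"
    and "left_series mul (m + 1) = {0}"
    and "1 \<le> k" and "k \<le> m - 1"
  shows "brace_star mul (- a) (aseq mul a (m - k)) =
         (\<Sum>j = 1..k. (if even j then aseq mul a (m - k + j) else - aseq mul a (m - k + j)))"
proof -
  note lb = assms(2)
  define t where "t = m - k - 1"
  have tk: "t + k = m - 1" "m - k = Suc t" using assms unfolding t_def by auto
  have am: "aseq_aux mul a m = 0" using aseq_in[of mul a m] assms(4)
    unfolding left_series_def by simp
  have zero3: "brace_star mul (- brace_star mul a a) v = 0" for v
  proof -
    have "- brace_star mul a a \<in> set_star mul UNIV UNIV"
      unfolding set_star_def by (auto intro!: gen_neg)
    moreover have r3: "right_series mul 3 = set_star mul (set_star mul UNIV UNIV) UNIV"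
      by (simp add: right_series_def numeral_3_eq_3)
    ultimately have "brace_star mul (- brace_star mul a a) v \<in> right_series mul 3"
      unfolding r3 set_star_def[of mul _ UNIV] by (intro gen_mem) blast
    then show ?thesis using assms(3) by simp
  qed
  have ainv: "mul a (- a) = - brace_star mul a a"
  proof -
    have "- a + mul a (- a) = - (- a + mul a a)" by (rule L_neg[OF lb])
    then show ?thesis by (simp add: brace_star_def algebra_simps)
  qed
  define b where "b = aseq mul a (m - k)"
  have b: "b = aseq_aux mul a t" unfolding b_def aseq_def tk by simp
  define c where "c = (\<Sum>j=0..k. sg j (aseq_aux mul a (t + j)))"
  have Lc: "- a + mul a c = b"
  proof -
    have "t + Suc k = m" using tk assms by auto
    then show ?thesis unfolding c_def using tele[OF lb, where a=a and k=k and t=t] am b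
      by (simp del: aseq_aux.simps add: sg_def)
  qed
  have "- a + mul a (- (- a) + mul (- a) b) = - mul a (- a) + mul (mul a (- a)) b"
    using L_comp[OF lb, of a "- a" b] by simp
  also have "\<dots> = b" using zero3[of b] unfolding ainv by (simp add: brace_star_def algebra_simps)
  finally have "- (- a) + mul (- a) b = c" using Lc L_inj[OF lb] by metis
  then have "brace_star mul (- a) b = c - b" by (simp add: brace_star_def algebra_simps)
  also have "c = b + (\<Sum>j=1..k. sg j (aseq_aux mul a (t + j)))"
    unfolding c_def b by (simp add: sum.atLeast_Suc_atMost sg_def)
  finally have "brace_star mul (- a) b = (\<Sum>j=1..k. sg j (aseq_aux mul a (t + j)))" by simp
  also have "\<dots> = (\<Sum>j = 1..k. (if even j then aseq mul a (m - k + j) else - aseq mul a (m - k + j)))"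
    by (rule sum.cong) (auto simp: sg_def aseq_def tk)
  finally show ?thesis unfolding b_def .
qed

end
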